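(* Let $\lambda\in\mathcal O$ be a nonzero limit ordinal and $\mathcal A,\mathcal B:\mathcal O\to\mathrm{SAT}$. Then, with $\liminf,\limsup$ computed in the lattice $\mathrm{SAT}$ of saturated sets, (a) $\limsup_{\alpha\to\lambda}(\mathcal A(\alpha)\boxplus\mathcal B(\alpha))\subseteq(\limsup_\lambda\mathcal A)\boxplus(\limsup_\lambda\mathcal B)$ and $(\liminf_\lambda\mathcal A)\boxplus(\liminf_\lambda\mathcal B)\subseteq\liminf_{\alpha\to\lambda}(\mathcal A(\alpha)\boxplus\mathcal B(\alpha))$; (b) the same two inclusions hold with $\boxtimes$ in place of $\boxplus$; (c) $\limsup_{\alpha\to\lambda}\mathcal A(\alpha)^\mu\subseteq(\limsup_\lambda\mathcal A)^\mu$ and $(\liminf_\lambda\mathcal A)^\mu\subseteq\liminf_{\alpha\to\lambda}\mathcal A(\alpha)^\mu$; (d) $\limsup_{\alpha\to\lambda}\mathcal A(\alpha)^\nu\subseteq(\limsup_\lambda\mathcal A)^\nu$ and $(\liminf_\lambda\mathcal A)^\nu\subseteq\liminf_{\alpha\to\lambda}\mathcal A(\alpha)^\nu$.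
   Context: $\mathcal O$ is the set of ordinals $\le\top_{\mathsf{ord}}$ for a fixed ordinal $\top_{\mathsf{ord}}$ ($=\beth_\omega$). For $f:\mathcal O\to\mathfrak L$ into a complete lattice and a nonzero limit $\lambda\in\mathcal O$: $\liminf_{\alpha\to\lambda}f(\alpha)=\sup_{\alpha_0<\lambda}\inf_{\alpha_0\le\alpha<\lambda}f(\alpha)$, $\limsup_{\alpha\to\lambda}f(\alpha)=\inf_{\alpha_0<\lambda}\sup_{\alpha_0\le\alpha<\lambda}f(\alpha)$. Terms: $r,s,t::=c\mid x\mid\lambda x\,t\mid r\,s$, with constants $c::=\langle\rangle\mid\mathsf{pair}\mid\mathsf{fst}\mid\mathsf{snd}\mid\mathsf{inl}\mid\mathsf{inr}\mid\mathsf{case}\mid\mathsf{in}\mid\mathsf{out}\mid\mathsf{fix}^\mu_n\mid\mathsf{fix}^\nu_n$ ($n\in\mathbb N$); $t_{1..n}$ abbreviates $t_1\dots t_n$. Evaluation frames: $e(\_)::=\_\,s\mid\mathsf{fst}\,\_\mid\mathsf{snd}\,\_\mid\mathsf{case}\,\_\mid\mathsf{out}\,\_\mid\mathsf{fix}^\mu_n\,s\,t_{1..n}\,\_$; evaluation contexts $E$ are finite (possibly empty) compositions of frames. Reduction $\longrightarrow$ is the closure under all term constructs of: $(\lambda x t)s\to[s/x]t$; $\mathsf{fst}(\mathsf{pair}\,r\,s)\to r$; $\mathsf{snd}(\mathsf{pair}\,r\,s)\to s$; $\mathsf{case}(\mathsf{inl}\,r)\to\lambda x\lambda y.x\,r$;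 $\mathsf{case}(\mathsf{inr}\,r)\to\lambda x\lambda y.y\,r$ ($x,y\notin FV(r)$); $\mathsf{out}(\mathsf{in}\,r)\to r$; $\mathsf{fix}^\mu_n\,s\,t_{1..n}(\mathsf{in}\,t)\to s(\mathsf{fix}^\mu_n s)t_{1..n}(\mathsf{in}\,t)$; $\mathsf{out}(\mathsf{fix}^\nu_n s\,t_{1..n})\to\mathsf{out}(s(\mathsf{fix}^\nu_n s)t_{1..n})$. $\mathsf S$ = strongly normalizing terms. Safe reduction $\rhd$ is the least relation closed under evaluation contexts and transitivity containing: $(\lambda x t)s\rhd[s/x]t$ if $s\in\mathsf S$; $\mathsf{fst}(\mathsf{pair}\,r\,s)\rhd r$ if $s\in\mathsf S$; $\mathsf{snd}(\mathsf{pair}\,r\,s)\rhd s$ if $r\in\mathsf S$; $\mathsf{out}(\mathsf{in}\,r)\rhd r$; $\mathsf{case}(\mathsf{inl}\,r)\rhd\lambda x\lambda y.x\,r$; $\mathsf{case}(\mathsf{inr}\,r)\rhd\lambda x\lambda y.y\,r$; $\mathsf{fix}^\mu_n s\,t_{1..n}(\mathsf{in}\,r)\rhd s(\mathsf{fix}^\mu_n s)t_{1..n}(\mathsf{in}\,r)$; $\mathsf{out}(\mathsf{fix}^\nu_n s\,t_{1..n})\rhd\mathsf{out}(s(\mathsf{fix}^\nu_n s)t_{1..n})$. For a term set $\mathcal A$: ${}^{\rhd}\mathcal A=\{t\mid t\in\mathcal A\text{ or }t\rhd t'\in\mathcal A\}$; closure $\overline{\mathcal A}={}^{\rhd}(\mathcal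 A\cup\{E(x)\mid x\text{ variable},E(x)\in\mathsf S\})$; $\mathcal N:=\overline{\emptyset}$. A set $\mathcal A$ is saturated if $\overline{\mathcal A}=\mathcal A$ and $\mathcal N\subseteq\mathcal A\subseteq\mathsf S$; $\mathrm{SAT}$ is the complete lattice of saturated sets ordered by $\subseteq$, with bottom $\mathcal N$, top $\mathsf S$, and infima/suprema of nonempty families given by intersection/union. Operations: $r\cdot\mathcal A=\{r\,s\mid s\in\mathcal A\}$, $e^{-1}\mathcal A=\{r\mid e(r)\in\mathcal A\}$; $\mathcal A\boxplus\mathcal B=\overline{\mathsf{inl}\cdot\mathcal A}\cup\overline{\mathsf{inr}\cdot\mathcal B}$; $\mathcal A\boxtimes\mathcal B=(\mathsf{fst}\,\_)^{-1}\mathcal A\cap(\mathsf{snd}\,\_)^{-1}\mathcal B$; $\mathcal A^\mu=\overline{\mathsf{in}\cdot\mathcal A}$; $\mathcal A^\nu=(\mathsf{out}\,\_)^{-1}\mathcal A$. *)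

theory Defs
  imports Main
begin

datatype const = CUnit | CPair | CFst | CSnd | CInl | CInr | CCase | CIn | COut
  | FixMu nat | FixNu nat

datatype trm = C const | Var nat | Lam trm | App trm trm

definition apps :: "trm \<Rightarrow> trm list \<Rightarrow> trm" where
  "apps r ts = foldl App r ts"

fun lift :: "nat \<Rightarrow> trm \<Rightarrow> trm" where
  "lift k (C c) = C c"
| "lift k (Var i) = (if i < k then Var i else Var (Suc i))"
| "lift k (Lam t) = Lam (lift (Suc k) t)"
| "lift k (App r s) = App (lift k r) (lift k s)"

fun subst :: "trm \<Rightarrow> nat \<Rightarrow> trm \<Rightarrow> trm" where
  "subst (C c) k s = C c"
| "subst (Var i) k s = (if i < k then Var i else if i = k then s else Var (i - 1))"
| "subst (Lam t) k s = Lam (subst t (Suc k) (lift 0 s))"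
| "subst (App r t) k s = App (subst r k s) (subst t k s)"

text \<open>\<open>\<lambda>x \<lambda>y. x r\<close> and \<open>\<lambda>x \<lambda>y. y r\<close> with x,y not free in r.\<close>
definition caseL :: "trm \<Rightarrow> trm" where
  "caseL r = Lam (Lam (App (Var 1) (lift 0 (lift 0 r))))"
definition caseR :: "trm \<Rightarrow> trm" where
  "caseR r = Lam (Lam (App (Var 0) (lift 0 (lift 0 r))))"

inductive red :: "trm \<Rightarrow> trm \<Rightarrow> bool" where
  beta: "red (App (Lam t) s) (subst t 0 s)"
| fst: "red (App (C CFst) (App (App (C CPair) r) s)) r"
| snd: "red (App (C CSnd) (App (App (C CPair) r) s)) s"
| caseInl: "red (App (C CCase) (App (C CInl) r)) (caseL r)"
| caseInr: "red (App (C CCase) (App (C CInr) r)) (caseR r)"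
| outIn: "red (App (C COut) (App (C CIn) r)) r"
| fixMu: "length ts = n \<Longrightarrow>
    red (apps (C (FixMu n)) (s # ts @ [App (C CIn) t]))
        (apps s (App (C (FixMu n)) s # ts @ [App (C CIn) t]))"
| fixNu: "length ts = n \<Longrightarrow>
    red (App (C COut) (apps (C (FixNu n)) (s # ts)))
        (App (C COut) (apps s (App (C (FixNu n)) s # ts)))"
| lam: "red t t' \<Longrightarrow> red (Lam t) (Lam t')"
| appL: "red r r' \<Longrightarrow> red (App r s) (App r' s)"
| appR: "red s s' \<Longrightarrow> red (App r s) (App r s')"

definition SN :: "trm set" where
  "SN = {t. Wellfounded.accp (\<lambda>y x. red x y) t}"

datatype frame = FApp trm | FFst | FSnd | FCase | FOut | FFix trm "trm list"

fun plug :: "frame \<Rightarrow> trm \<Rightarrow> trm" where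
  "plug (FApp s) r = App r s"
| "plug FFst r = App (C CFst) r"
| "plug FSnd r = App (C CSnd) r"
| "plug FCase r = App (C CCase) r"
| "plug FOut r = App (C COut) r"
| "plug (FFix s ts) r = apps (C (FixMu (length ts))) (s # ts @ [r])"

fun plugE :: "frame list \<Rightarrow> trm \<Rightarrow> trm" where
  "plugE [] r = r"
| "plugE (e # E) r = plug e (plugE E r)"

inductive sred :: "trm \<Rightarrow> trm \<Rightarrow> bool" where
  beta: "s \<in> SN \<Longrightarrow> sred (App (Lam t) s) (subst t 0 s)"
| fst: "s \<in> SN \<Longrightarrow> sred (App (C CFst) (App (App (C CPair) r) s)) r"
| snd: "r \<in> SN \<Longrightarrow> sred (App (C CSnd) (App (App (C CPair) r) s)) s"
| outIn: "sred (App (C COut) (App (C CIn) r)) r"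
| caseInl: "sred (App (C CCase) (App (C CInl) r)) (caseL r)"
| caseInr: "sred (App (C CCase) (App (C CInr) r)) (caseR r)"
| fixMu: "length ts = n \<Longrightarrow>
    sred (apps (C (FixMu n)) (s # ts @ [App (C CIn) r]))
         (apps s (App (C (FixMu n)) s # ts @ [App (C CIn) r]))"
| fixNu: "length ts = n \<Longrightarrow>
    sred (App (C COut) (apps (C (FixNu n)) (s # ts)))
         (App (C COut) (apps s (App (C (FixNu n)) s # ts)))"
| ctx: "sred t t' \<Longrightarrow> sred (plugE E t) (plugE E t')"
| trans: "sred t t' \<Longrightarrow> sred t' t'' \<Longrightarrow> sred t t''"

definition pre_sred :: "trm set \<Rightarrow> trm set" where
  "pre_sred A = {t. t \<in> A \<or> (\<exists>t'. sred t t' \<and> t' \<in> A)}"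

definition closure :: "trm set \<Rightarrow> trm set" where
  "closure A = pre_sred (A \<union> {plugE E (Var x) | E x. plugE E (Var x) \<in> SN})"

definition Neutral :: "trm set" where
  "Neutral = closure {}"

definition saturated :: "trm set \<Rightarrow> bool" where
  "saturated A \<longleftrightarrow> closure A = A \<and> Neutral \<subseteq> A \<and> A \<subseteq> SN"

definition dot :: "trm \<Rightarrow> trm set \<Rightarrow> trm set" where
  "dot r A = {App r s | s. s \<in> A}"

definition frame_inv :: "frame \<Rightarrow> trm set \<Rightarrow> trm set" where
  "frame_inv e A = {r. plug e r \<in> A}"

definition boxplus :: "trm set \<Rightarrow> trm set \<Rightarrow> trm set" where
  "boxplus A B = closure (dot (C CInl) A) \<union> closure (dot (C CInr) B)"

definition boxtimes :: "trm set \<Rightarrow> trm set \<Rightarrow> trm set" where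
  "boxtimes A B = frame_inv FFst A \<inter> frame_inv FSnd B"

definition satmu :: "trm set \<Rightarrow> trm set" where
  "satmu A = closure (dot (C CIn) A)"

definition satnu :: "trm set \<Rightarrow> trm set" where
  "satnu A = frame_inv FOut A"

text \<open>In SAT, infima/suprema of nonempty families are intersections/unions;
  all families below are nonempty when lam is a nonzero limit.\<close>

definition is_nonzero_limit :: "'o::wellorder \<Rightarrow> bool" where
  "is_nonzero_limit lam \<longleftrightarrow> (\<exists>a. a < lam) \<and> (\<forall>a<lam. \<exists>b. a < b \<and> b < lam)"

definition sat_liminf :: "('o::wellorder \<Rightarrow> trm set) \<Rightarrow> 'o \<Rightarrow> trm set" where
  "sat_liminf f lam = (\<Union>a0\<in>{..<lam}. \<Inter>a\<in>{a0..<lam}. f a)"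

definition sat_limsup :: "('o::wellorder \<Rightarrow> trm set) \<Rightarrow> 'o \<Rightarrow> trm set" where
  "sat_limsup f lam = (\<Inter>a0\<in>{..<lam}. \<Union>a\<in>{a0..<lam}. f a)"

end

theory Submission imports Defs begin

inductive hs :: "trm \<Rightarrow> trm \<Rightarrow> bool" where
  beta: "s \<in> SN \<Longrightarrow> hs (App (Lam t) s) (subst t 0 s)"
| fst: "s \<in> SN \<Longrightarrow> hs (App (C CFst) (App (App (C CPair) r) s)) r"
| snd: "r \<in> SN \<Longrightarrow> hs (App (C CSnd) (App (App (C CPair) r) s)) s"
| outIn: "hs (App (C COut) (App (C CIn) r)) r"
| caseInl: "hs (App (C CCase) (App (C CInl) r)) (caseL r)"
| caseInr: "hs (App (C CCase) (App (C CInr) r)) (caseR r)"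
| fixMu: "length ts = n \<Longrightarrow>
    hs (apps (C (FixMu n)) (s # ts @ [App (C CIn) r]))
         (apps s (App (C (FixMu n)) s # ts @ [App (C CIn) r]))"
| fixNu: "length ts = n \<Longrightarrow>
    hs (App (C COut) (apps (C (FixNu n)) (s # ts)))
         (App (C COut) (apps s (App (C (FixNu n)) s # ts)))"
| ctx1: "hs t t' \<Longrightarrow> hs (plug e t) (plug e t')"

lemma apps_Nil[simp]: "apps r [] = r" by (simp add: apps_def)

lemma apps_Cons_snoc[simp]: "apps r (s # ts @ [x]) = App (apps r (s#ts)) x"
  by (simp add: apps_def)

lemma apps_snoc: "apps r (ts @ [x]) = App (apps r ts) x"
  by (simp add: apps_def)

lemma apps_C_eq_C[simp]: "apps (C c) xs = C d \<longleftrightarrow> xs = [] \<and> c = d"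
  by (induction xs rule: rev_induct) (auto simp: apps_def)

lemma apps_C_not_Lam[simp]: "apps (C c) xs \<noteq> Lam t"
  by (induction xs rule: rev_induct) (auto simp: apps_def)

lemma apps_C_not_Var[simp]: "apps (C c) xs \<noteq> Var i"
  by (induction xs rule: rev_induct) (auto simp: apps_def)

lemma apps_C_inj: "apps (C c) xs = apps (C d) ys \<Longrightarrow> c = d \<and> xs = ys"
proof (induction xs arbitrary: ys rule: rev_induct)
  case Nil then show ?case by (cases ys rule: rev_cases) (auto simp: apps_def)
next
  case (snoc x xs) then show ?case by (cases ys rule: rev_cases) (auto simp: apps_def)
qed

lemma apps_C_eq_App: "apps (C c) xs = App a b \<longleftrightarrow> (\<exists>ys. xs = ys @ [b] \<and> a = apps (C c) ys)"
  by (cases xs rule: rev_cases) (auto simp: apps_def)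
lemma apps_C_App_C[simp]: "apps (C d) xs = App (C c) r \<longleftrightarrow> xs = [r] \<and> c = d"
  by (cases xs rule: rev_cases) (auto simp: apps_snoc)
lemma apps_C_App_C'[simp]: "App (C c) r = apps (C d) xs \<longleftrightarrow> xs = [r] \<and> c = d"
  by (metis apps_C_App_C)

lemma plug_FFix: "plug (FFix s ts) r = App (apps (C (FixMu (length ts))) (s#ts)) r"
  by simp

lemma plug_not_C[simp]: "plug e t \<noteq> C c" "C c \<noteq> plug e t"
  by (cases e; auto)+

lemma apps_C_eq_C'[simp]: "C d = apps (C c) xs \<longleftrightarrow> xs = [] \<and> c = d"
  by (metis apps_C_eq_C)
lemma apps_C_not_Lam'[simp]: "Lam t \<noteq> apps (C c) xs"
  by (metis apps_C_not_Lam)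

lemma plug_not_Lam[simp]: "plug e t \<noteq> Lam t'" "Lam t' \<noteq> plug e t"
  by (cases e; auto)+

lemma nostep_C: "\<not> hs (C c) u"
  by (auto elim: hs.cases)

lemma nostep_Lam: "\<not> hs (Lam t) u"
  by (auto elim: hs.cases)

lemma L1: "hs (apps (C (FixMu n)) xs) u \<Longrightarrow> n + 2 \<le> length xs"
proof (induction xs arbitrary: u rule: rev_induct)
  case Nil then show ?case by (simp add: apps_def nostep_C)
next
  case (snoc y ys)
  from snoc.prems have "hs (App (apps (C (FixMu n)) ys) y) u" by (simp add: apps_snoc)
  then show ?case
  proof cases
    case (fixMu ts s r)
    then show ?thesis by (auto dest!: apps_C_inj)
  next
    case (ctx1 t t' e)
    then show ?thesis
    proof (cases e)
      case (FApp x1)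
      then show ?thesis using ctx1 snoc.IH by fastforce
    next
      case (FFix x61 x62)
      then show ?thesis using ctx1 by (auto dest!: apps_C_inj)
    qed auto
  qed auto
qed

lemma L2: "\<not> hs (apps (C (FixNu n)) xs) u"
proof (induction xs arbitrary: u rule: rev_induct)
  case Nil then show ?case by (simp add: apps_def nostep_C)
next
  case (snoc y ys)
  show ?case
  proof
    assume "hs (apps (C (FixNu n)) (ys @ [y])) u"
    hence "hs (App (apps (C (FixNu n)) ys) y) u" by (simp add: apps_snoc)
    then show False
    proof cases
      case (fixMu ts s r)
      then show ?thesis by (auto dest!: apps_C_inj)
    next
      case (ctx1 t t' e)
      then show ?thesis
      proof (cases e)
        case (FApp x1)
        then show ?thesis using ctx1 snoc.IH by fastforce
      next
        case (FFix x61 x62)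
        then show ?thesis using ctx1 by (auto dest!: apps_C_inj)
      qed auto
    qed auto
  qed
qed

lemma nostep_ctor: "k \<in> {CIn, CInl, CInr} \<Longrightarrow> \<not> hs (App (C k) s) u"
proof
  assume k: "k \<in> {CIn, CInl, CInr}" and h: "hs (App (C k) s) u"
  from h show False
  proof cases
    case (ctx1 t t' e)
    then show ?thesis using k by (cases e) (auto simp: nostep_C)
  qed (use k in auto)
qed

lemma nostep_pair: "\<not> hs (App (App (C CPair) r) s) u"
proof
  assume h: "hs (App (App (C CPair) r) s) u"
  from h show False
  proof cases
    case (ctx1 t t' e)
    then show ?thesis
    proof (cases e)
      case (FApp x)
      with ctx1 have "hs (App (C CPair) r) t'" by simp
      then show ?thesis
      proof cases
        case (ctx1 t t' e)
        then show ?thesis by (cases e) (auto simp: nostep_C dest!: apps_C_inj)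
      qed auto
    qed (auto dest!: apps_C_inj simp: apps_C_eq_App)
  qed (auto dest!: apps_C_inj simp: apps_C_eq_App)
qed

lemma plug_eq_App: "plug e t = App a b \<longleftrightarrow> (e = FApp b \<and> t = a) \<or> (e=FFst \<and> a = C CFst \<and> b = t)
  \<or> (e=FSnd \<and> a = C CSnd \<and> b = t) \<or> (e=FCase \<and> a = C CCase \<and> b = t) \<or> (e=FOut \<and> a = C COut \<and> b = t)
  \<or> (\<exists>s ts. e = FFix s ts \<and> b = t \<and> a = apps (C (FixMu (length ts))) (s#ts))"
  by (cases e) auto

lemma plug_eq_App': "App a b = plug e t \<longleftrightarrow> (e = FApp b \<and> t = a) \<or> (e=FFst \<and> a = C CFst \<and> b = t)
  \<or> (e=FSnd \<and> a = C CSnd \<and> b = t) \<or> (e=FCase \<and> a = C CCase \<and> b = t) \<or> (e=FOut \<and> a = C COut \<and> b = t)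
  \<or> (\<exists>s ts. e = FFix s ts \<and> b = t \<and> a = apps (C (FixMu (length ts))) (s#ts))"
  by (cases e) auto

lemma L1': "hs (apps (C (FixMu (length ts))) (s#ts)) u \<Longrightarrow> False"
  using L1 by fastforce


lemma plug_eq: "plug e t = plug e2 t2 \<Longrightarrow> hs t u \<Longrightarrow> hs t2 u2 \<Longrightarrow> e = e2 \<and> t = t2"
  by (cases e; cases e2) (auto simp: nostep_C dest: L1' apps_C_inj)

lemma hs_det: "hs t u \<Longrightarrow> hs t v \<Longrightarrow> u = v"
proof (induction arbitrary: v rule: hs.induct)
  case (beta s t)
  from beta.prems show ?case
  proof cases
    case (ctx1 t2 t2' e2)
    then show ?thesis by (cases e2) (auto simp: nostep_Lam)
  qed auto
next
  case (fst s r)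
  from fst.prems show ?case
  proof cases
    case (ctx1 t2 t2' e2)
    then show ?thesis by (cases e2) (auto simp: nostep_C nostep_pair)
  qed auto
next
  case (snd s r)
  from snd.prems show ?case
  proof cases
    case (ctx1 t2 t2' e2)
    then show ?thesis by (cases e2) (auto simp: nostep_C nostep_pair)
  qed auto
next
  case (outIn r)
  from outIn.prems show ?case
  proof cases
    case (ctx1 t2 t2' e2)
    then show ?thesis by (cases e2) (auto simp: nostep_C nostep_ctor)
  qed (auto simp: apps_C_eq_App)
next
  case (caseInl r)
  from caseInl.prems show ?case
  proof cases
    case (ctx1 t2 t2' e2)
    then show ?thesis by (cases e2) (auto simp: nostep_C nostep_ctor)
  qed auto
next
  case (caseInr r)
  from caseInr.prems show ?case
  proof cases
    case (ctx1 t2 t2' e2)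
    then show ?thesis by (cases e2) (auto simp: nostep_C nostep_ctor)
  qed auto
next
  case (fixMu ts n s r)
  from fixMu.prems have "hs (App (apps (C (FixMu n)) (s#ts)) (App (C CIn) r)) v" by simp
  then show ?case
  proof cases
    case (fixMu ts2 s2 r2)
    then show ?thesis using \<open>length ts = n\<close> by (auto dest!: apps_C_inj)
  next
    case (ctx1 t2 t2' e2)
    then show ?thesis using \<open>length ts = n\<close>
      by (cases e2) (auto simp: nostep_ctor dest!: apps_C_inj L1')
  qed auto
next
  case (fixNu ts n s)
  from fixNu.prems show ?case
  proof cases
    case (fixNu ts2 s2)
    then show ?thesis by (auto dest!: apps_C_inj)
  next
    case (ctx1 t2 t2' e2)
    then show ?thesis
      by (cases e2) (auto simp: nostep_C L2)
  qed (auto simp: apps_C_eq_App)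
next
  case (ctx1 t t' e)
  from ctx1.prems show ?case
  proof cases
    case (ctx1 t2 t2' e2)
    then have "e = e2 \<and> t = t2" using plug_eq \<open>hs t t'\<close> by blast
    then show ?thesis using ctx1 ctx1.IH by auto
  next
    case beta
    then show ?thesis using ctx1.hyps by (cases e) (auto simp: nostep_Lam)
  next
    case fst
    then show ?thesis using ctx1.hyps by (cases e) (auto simp: nostep_pair nostep_C)
  next
    case snd
    then show ?thesis using ctx1.hyps by (cases e) (auto simp: nostep_pair nostep_C)
  next
    case outIn
    then show ?thesis using ctx1.hyps by (cases e) (auto simp: nostep_ctor nostep_C)
  next
    case caseInl
    then show ?thesis using ctx1.hyps by (cases e) (auto simp: nostep_ctor nostep_C)
  next
    case caseInr
    then show ?thesis using ctx1.hyps by (cases e) (auto simp: nostep_ctor nostep_C)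
  next
    case fixMu
    then show ?thesis using ctx1.hyps by (cases e) (auto simp: nostep_ctor nostep_C dest: L1' apps_C_inj)
  next
    case fixNu
    then show ?thesis using ctx1.hyps by (cases e) (auto simp: L2 nostep_C)
  qed
qed

lemma hs_plugE: "hs t t' \<Longrightarrow> hs (plugE E t) (plugE E t')"
  by (induction E) (auto intro: hs.ctx1)

lemma hs_plugE_tr: "hs\<^sup>+\<^sup>+ t t' \<Longrightarrow> hs\<^sup>+\<^sup>+ (plugE E t) (plugE E t')"
proof (induction rule: tranclp_induct)
  case (base y) then show ?case by (metis hs_plugE tranclp.r_into_trancl)
next
  case (step y z) then show ?case by (meson hs_plugE tranclp.trancl_into_trancl)
qed

lemma sred_hs: "sred t u \<Longrightarrow> hs\<^sup>+\<^sup>+ t u"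
proof (induction rule: sred.induct)
  case (ctx t t' E) then show ?case by (simp add: hs_plugE_tr)
next
  case (trans t t' t'') then show ?case by simp
qed (metis hs.intros tranclp.r_into_trancl)+

lemma det_nf: "hs\<^sup>+\<^sup>+ t u \<Longrightarrow> hs\<^sup>+\<^sup>+ t v \<Longrightarrow> (\<And>w. \<not> hs u w) \<Longrightarrow> (\<And>w. \<not> hs v w) \<Longrightarrow> u = v"
proof (induction arbitrary: v rule: converse_tranclp_induct)
  case (base y)
  from base.prems(1) obtain w where w: "hs y w" "hs\<^sup>*\<^sup>* w v" by (auto dest: tranclpD)
  have "w = u" using hs_det base.hyps w(1) by blast
  with w(2) base.prems(2) show ?case by (metis converse_rtranclpE)
next
  case (step y z)
  from step.prems(1) obtain w where w: "hs y w" "hs\<^sup>*\<^sup>* w v" by (auto dest: tranclpD)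
  have "w = z" using hs_det step.hyps(1) w(1) by blast
  show ?case
  proof (cases "z = v")
    case True
    with step.hyps(2) step.prems(3) show ?thesis by (metis tranclpD)
  next
    case False
    with w(2) \<open>w = z\<close> have "hs\<^sup>+\<^sup>+ z v" by (metis rtranclpD)
    then show ?thesis using step.IH step.prems by blast
  qed
qed

lemma reach_uniq:
  assumes k: "k \<in> {CIn, CInl, CInr}"
    and "t = App (C k) s \<or> sred t (App (C k) s)"
    and "t = App (C k) s' \<or> sred t (App (C k) s')"
  shows "s = s'"
proof -
  have nf: "\<And>x w. \<not> hs (App (C k) x) w" using nostep_ctor[OF k] by blast
  have nf2: "\<And>x y. \<not> hs\<^sup>+\<^sup>+ (App (C k) x) y" using nf by (metis tranclpD)
  show ?thesis using assms(2,3) det_nf[OF sred_hs sred_hs nf nf] nf2 sred_hs by (metis trm.inject(4))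
qed

definition Nset :: "trm set" where
  "Nset = {plugE E (Var x) | E x. plugE E (Var x) \<in> SN}"

lemma closure_iff: "t \<in> closure X \<longleftrightarrow> t \<in> X \<or> t \<in> Nset \<or> (\<exists>t'. sred t t' \<and> (t' \<in> X \<or> t' \<in> Nset))"
  unfolding closure_def pre_sred_def Nset_def by blast

lemma limsup_iff: "x \<in> sat_limsup f lam \<longleftrightarrow> (\<forall>b<lam. \<exists>a. b \<le> a \<and> a < lam \<and> x \<in> f a)"
  unfolding sat_limsup_def by (simp only: INT_iff UN_iff lessThan_iff atLeastLessThan_iff Ball_def Bex_def) blast

lemma liminf_iff: "x \<in> sat_liminf f lam \<longleftrightarrow> (\<exists>b<lam. \<forall>a. b \<le> a \<and> a < lam \<longrightarrow> x \<in> f a)"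
  unfolding sat_liminf_def by (simp only: INT_iff UN_iff lessThan_iff atLeastLessThan_iff Ball_def Bex_def)

lemma G:
  fixes F :: "'o::wellorder \<Rightarrow> trm set"
  assumes k: "k \<in> {CIn, CInl, CInr}" and a0: "a0 < lam"
    and cof: "\<forall>b<lam. \<exists>a. b \<le> a \<and> a < lam \<and> t \<in> closure (dot (C k) (F a))"
  shows "t \<in> closure (dot (C k) (sat_limsup F lam))"
proof (cases "t \<in> Nset \<or> (\<exists>t'. sred t t' \<and> t' \<in> Nset)")
  case True then show ?thesis by (auto simp: closure_iff)
next
  case False
  define P where "P s \<longleftrightarrow> t = App (C k) s \<or> sred t (App (C k) s)" for s
  have ex: "\<exists>s\<in>F a. P s" if "t \<in> closure (dot (C k) (F a))" for a
    using that False unfolding closure_iff P_def dot_def by blast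
  obtain a1 where "t \<in> closure (dot (C k) (F a1))" using cof a0 by blast
  with ex obtain s1 where s1: "P s1" by blast
  have "s1 \<in> sat_limsup F lam"
    unfolding limsup_iff
  proof (intro allI impI)
    fix b assume "b < lam"
    then obtain a where a: "b \<le> a" "a < lam" "t \<in> closure (dot (C k) (F a))" using cof by blast
    with ex obtain s where "s \<in> F a" "P s" by blast
    with s1 reach_uniq[OF k] have "s1 \<in> F a" unfolding P_def by metis
    with a show "\<exists>a. b \<le> a \<and> a < lam \<and> s1 \<in> F a" by blast
  qed
  with s1 show ?thesis unfolding P_def closure_iff dot_def by blast
qed

lemma G2:
  fixes F :: "'o::wellorder \<Rightarrow> trm set"
  assumes a0: "a0 < lam" and t: "t \<in> closure (dot r (sat_liminf F lam))"
  shows "t \<in> sat_liminf (\<lambda>a. closure (dot r (F a))) lam"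
proof (cases "t \<in> Nset \<or> (\<exists>t'. sred t t' \<and> t' \<in> Nset)")
  case True then show ?thesis using a0 by (auto simp: closure_iff liminf_iff)
next
  case False
  then obtain s where s: "s \<in> sat_liminf F lam" "t = App r s \<or> sred t (App r s)"
    using t unfolding closure_iff dot_def by blast
  then obtain b where "b < lam" "\<forall>a. b \<le> a \<and> a < lam \<longrightarrow> s \<in> F a" by (auto simp: liminf_iff)
  with s(2) show ?thesis unfolding liminf_iff closure_iff dot_def by blast
qed

lemma plus_limsup:
  fixes A B :: "'o::wellorder \<Rightarrow> trm set"
  assumes a0: "a0 < lam"
  shows "sat_limsup (\<lambda>a. boxplus (A a) (B a)) lam \<subseteq> boxplus (sat_limsup A lam) (sat_limsup B lam)"
proof
  fix t assume t: "t \<in> sat_limsup (\<lambda>a. boxplus (A a) (B a)) lam"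
  show "t \<in> boxplus (sat_limsup A lam) (sat_limsup B lam)"
  proof (cases "\<forall>b<lam. \<exists>a. b \<le> a \<and> a < lam \<and> t \<in> closure (dot (C CInl) (A a))")
    case True
    then show ?thesis using G[of CInl a0 lam t A] a0 unfolding boxplus_def by blast
  next
    case False
    then obtain b0 where b0: "b0 < lam" "\<And>a. b0 \<le> a \<Longrightarrow> a < lam \<Longrightarrow> t \<notin> closure (dot (C CInl) (A a))"
      by blast
    have "\<forall>b<lam. \<exists>a. b \<le> a \<and> a < lam \<and> t \<in> closure (dot (C CInr) (B a))"
    proof (intro allI impI)
      fix b assume "b < lam"
      then have "max b b0 < lam" using b0 by simp
      then obtain a where a: "max b b0 \<le> a" "a < lam" "t \<in> boxplus (A a) (B a)"
        using t unfolding limsup_iff by blast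
      then show "\<exists>a. b \<le> a \<and> a < lam \<and> t \<in> closure (dot (C CInr) (B a))"
        using b0 unfolding boxplus_def by auto
    qed
    then show ?thesis using G[of CInr a0 lam t B] a0 unfolding boxplus_def by blast
  qed
qed

lemma plus_liminf:
  fixes A B :: "'o::wellorder \<Rightarrow> trm set"
  assumes a0: "a0 < lam"
  shows "boxplus (sat_liminf A lam) (sat_liminf B lam) \<subseteq> sat_liminf (\<lambda>a. boxplus (A a) (B a)) lam"
proof
  fix t assume "t \<in> boxplus (sat_liminf A lam) (sat_liminf B lam)"
  then consider "t \<in> closure (dot (C CInl) (sat_liminf A lam))" | "t \<in> closure (dot (C CInr) (sat_liminf B lam))"
    unfolding boxplus_def by blast
  then show "t \<in> sat_liminf (\<lambda>a. boxplus (A a) (B a)) lam"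
  proof cases
    case 1
    from G2[OF a0 1] show ?thesis unfolding liminf_iff boxplus_def by blast
  next
    case 2
    from G2[OF a0 2] show ?thesis unfolding liminf_iff boxplus_def by blast
  qed
qed

lemma times_limsup:
  "sat_limsup (\<lambda>a. boxtimes (A a) (B a)) lam \<subseteq> boxtimes (sat_limsup A lam) (sat_limsup B lam)"
  unfolding limsup_iff boxtimes_def frame_inv_def subset_iff by blast

lemma times_liminf:
  fixes A B :: "'o::wellorder \<Rightarrow> trm set"
  shows "boxtimes (sat_liminf A lam) (sat_liminf B lam) \<subseteq> sat_liminf (\<lambda>a. boxtimes (A a) (B a)) lam"
proof
  fix t assume "t \<in> boxtimes (sat_liminf A lam) (sat_liminf B lam)"
  then obtain b1 b2 where b: "b1 < lam" "b2 < lam" "\<And>a. b1 \<le> a \<Longrightarrow> a < lam \<Longrightarrow> plug FFst t \<in> A a"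
     "\<And>a. b2 \<le> a \<Longrightarrow> a < lam \<Longrightarrow> plug FSnd t \<in> B a"
    unfolding boxtimes_def frame_inv_def liminf_iff by blast
  show "t \<in> sat_liminf (\<lambda>a. boxtimes (A a) (B a)) lam"
    unfolding liminf_iff boxtimes_def frame_inv_def
    by (rule exI[of _ "max b1 b2"]) (use b in auto)
qed

lemma mu_limsup:
  fixes A :: "'o::wellorder \<Rightarrow> trm set"
  assumes a0: "a0 < lam"
  shows "sat_limsup (\<lambda>a. satmu (A a)) lam \<subseteq> satmu (sat_limsup A lam)"
proof
  fix t assume "t \<in> sat_limsup (\<lambda>a. satmu (A a)) lam"
  then have "\<forall>b<lam. \<exists>a. b \<le> a \<and> a < lam \<and> t \<in> closure (dot (C CIn) (A a))"
    by (simp add: limsup_iff satmu_def)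
  from G[OF _ a0 this] show "t \<in> satmu (sat_limsup A lam)" by (simp add: satmu_def)
qed

lemma mu_liminf:
  fixes A :: "'o::wellorder \<Rightarrow> trm set"
  assumes a0: "a0 < lam"
  shows "satmu (sat_liminf A lam) \<subseteq> sat_liminf (\<lambda>a. satmu (A a)) lam"
  using G2[OF a0] unfolding satmu_def by blast

lemma nu_limsup: "sat_limsup (\<lambda>a. satnu (A a)) lam \<subseteq> satnu (sat_limsup A lam)"
  unfolding limsup_iff satnu_def frame_inv_def subset_iff by blast

lemma nu_liminf: "satnu (sat_liminf A lam) \<subseteq> sat_liminf (\<lambda>a. satnu (A a)) lam"
  unfolding liminf_iff satnu_def frame_inv_def subset_iff by blast

theorem lemma4p6:
  fixes lam :: "'o::wellorder" and A B :: "'o \<Rightarrow> trm set"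
  assumes "is_nonzero_limit lam"
    and "\<And>a. saturated (A a)" and "\<And>a. saturated (B a)"
  shows "(sat_limsup (\<lambda>a. boxplus (A a) (B a)) lam
           \<subseteq> boxplus (sat_limsup A lam) (sat_limsup B lam))
     \<and> (boxplus (sat_liminf A lam) (sat_liminf B lam)
           \<subseteq> sat_liminf (\<lambda>a. boxplus (A a) (B a)) lam)
     \<and> (sat_limsup (\<lambda>a. boxtimes (A a) (B a)) lam
           \<subseteq> boxtimes (sat_limsup A lam) (sat_limsup B lam))
     \<and> (boxtimes (sat_liminf A lam) (sat_liminf B lam)
           \<subseteq> sat_liminf (\<lambda>a. boxtimes (A a) (B a)) lam)
     \<and> (sat_limsup (\<lambda>a. satmu (A a)) lam \<subseteq> satmu (sat_limsup A lam))
     \<and> (satmu (sat_liminf A lam) \<subseteq> sat_liminf (\<lambda>a. satmu (A a)) lam)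
     \<and> (sat_limsup (\<lambda>a. satnu (A a)) lam \<subseteq> satnu (sat_limsup A lam))
     \<and> (satnu (sat_liminf A lam) \<subseteq> sat_liminf (\<lambda>a. satnu (A a)) lam)"
proof -
  obtain a0 where a0: "a0 < lam" using assms(1) unfolding is_nonzero_limit_def by blast
  show ?thesis
    using plus_limsup[OF a0, of A B] plus_liminf[OF a0, of A B] times_limsup[of A B lam]
      times_liminf[of A lam B] mu_limsup[OF a0, of A] mu_liminf[OF a0, of A] nu_limsup[of A lam]
      nu_liminf[of A lam] by blast
qed

end
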